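(* Let $f,g\in C(\mathbb{R}_0^+\times\mathbb{R}_0^+,\mathbb{R}_0^+)$ be such that $t\mapsto f(t,s)$ and $t\mapsto g(t,s)$ are nondecreasing for every fixed $s$. Let $\phi\in C(\mathbb{R}_0^+,\mathbb{R}_0^+)$ be strictly increasing with $\lim_{x\to\infty}\phi(x)=\infty$. Let $c\in C(\mathbb{R}_0^+,\mathbb{R}^+)$ be nondecreasing. Let $\eta,w\in C(\mathbb{R}_0^+,\mathbb{R}_0^+)$ be nondecreasing with $\eta(x)>0$ and $w(x)>0$ for all $x>0$. Let $x_0$, $G$, $\Psi$ be as in the context (in particular $\int_{x_0}^\infty \frac{ds}{\eta(\phi^{-1}(s))}=\infty$). Let $\alpha\in C^1(\mathbb{R}_0^+,\mathbb{R}_0^+)$ be nondecreasing with $\alpha(t)\le t$ for all $t\ge 0$. Suppose $u\in C(\mathbb{R}_0^+,\mathbb{R}_0^+)$ satisfies $$\phi(u(t))\le c(t)+\int_0^{\alpha(t)}\big[f(t,s)\,\eta(u(s))\,w(u(s))+g(t,s)\,\eta(u(s))\big]\,ds\qquad\text{for all } t\ge 0.$$ Define $p(t)=G(c(t))+\int_0^{\alpha(t)}g(t,s)\,ds$. Then there exists $\tau>0$ such that for all $t\in[0,\tau]$, $$\Psi(p(t))+\int_0^{\alpha(t)}f(t,s)\,ds\in \Psi\big((0,\infty)\big)=\mathrm{Dom}(\Psi^{-1})$$ and $$u(t)\le \phi^{-1}\Big\{G^{-1}\Big(\Psi^{-1}\Big[\Psi(p(t))+\int_0^{\alpha(t)}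f(t,s)\,ds\Big]\Big)\Big\}.$$
   Context: $\mathbb{R}_0^+=[0,\infty)$, $\mathbb{R}^+=(0,\infty)$. $\phi^{-1}$ denotes the inverse of $\phi$, defined on $[\phi(0),\infty)$. The constant $x_0$ is a real number with $\phi(0)\le x_0<c(0)$ such that $\int_{x_0}^x\frac{ds}{\eta(\phi^{-1}(s))}<\infty$ for every $x\ge x_0$ and $\int_{x_0}^\infty\frac{ds}{\eta(\phi^{-1}(s))}=\infty$ (in the paper: $x_0>0$ may be required when $\int_0^x\frac{ds}{\eta(\phi^{-1}(s))}=\infty$, and $x_0\ge0$ is allowed when this integral is finite). Define $G:[x_0,\infty)\to[0,\infty)$ by $G(x)=\int_{x_0}^x\frac{ds}{\eta(\phi^{-1}(s))}$; it is a strictly increasing bijection with inverse $G^{-1}$. Fix $x_1>0$ and define, for $x>0$, $\Psi(x)=\int_{x_1}^x\frac{ds}{w(\phi^{-1}(G^{-1}(s)))}$; $\Psi$ is strictly increasing on $(0,\infty)$, $\Psi^{-1}$ is its inverse and $\mathrm{Dom}(\Psi^{-1})=\Psi((0,\infty))$. *)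

theory Defs
  imports "HOL-Analysis.Analysis"
begin

definition phi_inv :: "(real \<Rightarrow> real) \<Rightarrow> real \<Rightarrow> real" where
  "phi_inv phi = the_inv_into {0..} phi"

definition G_fun :: "(real \<Rightarrow> real) \<Rightarrow> (real \<Rightarrow> real) \<Rightarrow> real \<Rightarrow> real \<Rightarrow> real" where
  "G_fun eta phi x0 x = (LINT s:{x0..x}|lborel. 1 / eta (phi_inv phi s))"

definition G_inv :: "(real \<Rightarrow> real) \<Rightarrow> (real \<Rightarrow> real) \<Rightarrow> real \<Rightarrow> real \<Rightarrow> real" where
  "G_inv eta phi x0 = the_inv_into {x0..} (G_fun eta phi x0)"

definition Psi_fun :: "(real \<Rightarrow> real) \<Rightarrow> (real \<Rightarrow> real) \<Rightarrow> (real \<Rightarrow> real) \<Rightarrow> real \<Rightarrow> real \<Rightarrow> real \<Rightarrow> real" where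
  "Psi_fun w eta phi x0 x1 x =
     interval_lebesgue_integral lborel (ereal x1) (ereal x)
       (\<lambda>s. 1 / w (phi_inv phi (G_inv eta phi x0 s)))"

definition Psi_inv :: "(real \<Rightarrow> real) \<Rightarrow> (real \<Rightarrow> real) \<Rightarrow> (real \<Rightarrow> real) \<Rightarrow> real \<Rightarrow> real \<Rightarrow> real \<Rightarrow> real" where
  "Psi_inv w eta phi x0 x1 = the_inv_into {0<..} (Psi_fun w eta phi x0 x1)"

end

theory Submission
  imports Defs
begin

lemma inv_facts:
  fixes f :: "real \<Rightarrow> real" and a :: real
  assumes cont: "\<And>X. continuous_on {a..X} f"
    and smono: "strict_mono_on {a..} f"
    and unb: "\<And>M. \<exists>x\<ge>a. f x \<ge> M"
    and gdef: "g = the_inv_into {a..} f"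
  shows "\<And>x. x \<ge> a \<Longrightarrow> g (f x) = x"
    and "\<And>y. y \<ge> f a \<Longrightarrow> g y \<ge> a \<and> f (g y) = y"
    and "\<And>y1 y2. f a \<le> y1 \<Longrightarrow> y1 \<le> y2 \<Longrightarrow> g y1 \<le> g y2"
    and "\<And>y. y > f a \<Longrightarrow> isCont g y \<and> g y > a"
    and "\<And>x y. a \<le> x \<Longrightarrow> x \<le> y \<Longrightarrow> f x \<le> f y"
proof -
  have inj: "inj_on f {a..}" using smono by (rule strict_mono_on_imp_inj_on)
  have mono: "f x \<le> f y" if "a \<le> x" "x \<le> y" for x y
  proof (cases "x = y")
    case False
    then have "f x < f y" using that by (intro strict_mono_onD[OF smono]) auto
    then show ?thesis by simp
  qed simp
  then show "\<And>x y. a \<le> x \<Longrightarrow> x \<le> y \<Longrightarrow> f x \<le> f y" by blast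
  have surj: "y \<in> f ` {a..}" if "y \<ge> f a" for y
  proof -
    obtain X where X: "X \<ge> a" "f X \<ge> y" using unb by blast
    from IVT'[of f a y X, OF that X(2) X(1) cont] show ?thesis by auto
  qed
  show gf: "\<And>x. x \<ge> a \<Longrightarrow> g (f x) = x" using the_inv_into_f_f[OF inj] gdef by auto
  show fg: "\<And>y. y \<ge> f a \<Longrightarrow> g y \<ge> a \<and> f (g y) = y"
  proof -
    fix y assume "y \<ge> f a"
    from surj[OF this] obtain x where "x \<ge> a" "y = f x" by auto
    then show "g y \<ge> a \<and> f (g y) = y" using gf by auto
  qed
  show gm: "\<And>y1 y2. f a \<le> y1 \<Longrightarrow> y1 \<le> y2 \<Longrightarrow> g y1 \<le> g y2"
  proof (rule ccontr)
    fix y1 y2 assume h: "f a \<le> y1" "y1 \<le> y2" "\<not> g y1 \<le> g y2"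
    have "f (g y2) < f (g y1)"
      using h fg[of y1] fg[of y2] by (intro strict_mono_onD[OF smono]) auto
    then show False using h fg[of y1] fg[of y2] by auto
  qed
  show "\<And>y. y > f a \<Longrightarrow> isCont g y \<and> g y > a"
  proof -
    fix y assume y: "y > f a"
    define x where "x = g y"
    have x: "x \<ge> a" "f x = y" using fg[of y] y by (auto simp: x_def)
    have xa: "x > a" using x y by (cases "x = a") auto
    define d where "d = min ((x - a) / 2) (1/2)"
    have d: "d > 0" using xa by (simp add: d_def)
    have "isCont g (f x)"
    proof (rule isCont_inverse_function[where f=f and g=g and x=x, OF d])
      fix z assume z: "\<bar>z - x\<bar> \<le> d"
      have za: "z > a" "z < x + 1" using z xa unfolding d_def abs_le_iff by auto
      show "g (f z) = z" using gf za by auto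
    next
      fix z assume z: "\<bar>z - x\<bar> \<le> d"
      have za: "z > a" "z < x + 1" using z xa unfolding d_def abs_le_iff by auto
      show "isCont f z"
        by (rule continuous_on_interior[OF cont[of "x+1"]]) (use za in auto)
    qed
    then show "isCont g y \<and> g y > a" using x xa x_def by auto
  qed
qed


lemma deriv_integral_at:
  fixes h F :: "real \<Rightarrow> real"
  assumes hc: "continuous_on {b..B} h" and yb: "b < y" "y < B"
    and F: "\<And>z. z \<in> {b..B} \<Longrightarrow> F z = C + integral {b..z} h"
  shows "(F has_real_derivative h y) (at y)"
proof -
  have "((\<lambda>z. integral {b..z} h) has_real_derivative h y) (at y within {b..B})"
    by (rule integral_has_real_derivative[OF hc]) (use yb in auto)
  then have "((\<lambda>z. integral {b..z} h) has_real_derivative h y) (at y)"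
    using at_within_interior[of y "{b..B}"] yb by auto
  then have "((\<lambda>z. C + integral {b..z} h) has_real_derivative 0 + h y) (at y)"
    by (rule DERIV_add[OF DERIV_const])
  then have "((\<lambda>z. C + integral {b..z} h) has_real_derivative h y) (at y)" by simp
  then show ?thesis
    by (rule has_field_derivative_transform_within_open[where S="{b<..<B}"]) (use yb F in auto)
qed

lemma lint_eq_integral:
  fixes h :: "real \<Rightarrow> real"
  assumes "continuous_on {a..b} h"
  shows "(LINT s:{a..b}|lborel. h s) = integral {a..b} h" and "h integrable_on {a..b}"
  using set_borel_integral_eq_integral[OF borel_integrable_atLeastAtMost'[OF assms]] by auto

locale bih =
  fixes phi eta w :: "real \<Rightarrow> real" and x0 x1 :: real
  assumes phi_cont: "continuous_on {0..} phi"
    and phi_strict: "strict_mono_on {0..} phi"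
    and phi_lim: "filterlim phi at_top at_top"
    and eta_cont: "continuous_on {0..} eta"
    and eta_nonneg: "\<forall>x\<ge>0. eta x \<ge> 0"
    and eta_mono: "mono_on {0..} eta"
    and eta_pos: "\<forall>x>0. eta x > 0"
    and w_cont: "continuous_on {0..} w"
    and w_mono: "mono_on {0..} w"
    and w_pos: "\<forall>x>0. w x > 0"
    and w_nonneg: "\<forall>x\<ge>0. w x \<ge> 0"
    and x0_ge: "phi 0 \<le> x0"
    and G_finite: "\<forall>x\<ge>x0. set_integrable lborel {x0..x} (\<lambda>s. 1 / eta (phi_inv phi s))"
    and G_infinite: "(\<integral>\<^sup>+ s\<in>{x0..}. ennreal (1 / eta (phi_inv phi s)) \<partial>lborel) = \<infinity>"
    and x1_pos: "x1 > 0"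
begin

abbreviation "pinv \<equiv> phi_inv phi"
abbreviation "gam s \<equiv> 1 / eta (pinv s)"
abbreviation "G \<equiv> G_fun eta phi x0"
abbreviation "Gi \<equiv> G_inv eta phi x0"
abbreviation "psi s \<equiv> 1 / w (pinv (Gi s))"
abbreviation "Psi \<equiv> Psi_fun w eta phi x0 x1"
abbreviation "Psii \<equiv> Psi_inv w eta phi x0 x1"

lemma phi_unb: "\<exists>x\<ge>0. phi x \<ge> M"
proof -
  have "eventually (\<lambda>x. M \<le> phi x) at_top" using phi_lim by (simp add: filterlim_at_top)
  then obtain N where "\<forall>x\<ge>N. M \<le> phi x" by (auto simp: eventually_at_top_linorder)
  then show ?thesis by (intro exI[of _ "max N 0"]) auto
qed

lemmas pinv_facts = inv_facts[OF continuous_on_subset[OF phi_cont] phi_strict phi_unb phi_inv_def, simplified]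

lemma pinv_le: "0 \<le> v \<Longrightarrow> phi v \<le> y \<Longrightarrow> v \<le> pinv y"
  using pinv_facts(1)[of v] pinv_facts(3)[of "phi v" y] pinv_facts(5)[of 0 v] by auto

lemma eta_isCont: "x > 0 \<Longrightarrow> isCont eta x"
  by (rule continuous_on_interior[OF eta_cont]) auto
lemma w_isCont: "x > 0 \<Longrightarrow> isCont w x"
  by (rule continuous_on_interior[OF w_cont]) auto

lemma gam_nonneg: "s \<ge> x0 \<Longrightarrow> gam s \<ge> 0"
  using pinv_facts(2)[of s] x0_ge eta_nonneg by auto

lemma gam_cont: assumes "s > x0" shows "gam s > 0" "isCont gam s"
proof -
  have p: "isCont pinv s" "pinv s > 0" using pinv_facts(4)[of s] assms x0_ge by auto
  then show "gam s > 0" using eta_pos by auto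
  have "isCont (\<lambda>s. eta (pinv s)) s" by (rule isCont_o2[OF p(1) eta_isCont[OF p(2)]])
  then show "isCont gam s" using eta_pos p by (intro continuous_intros) auto
qed

lemma G_int: assumes "x \<ge> x0" shows "gam integrable_on {x0..x}" "G x = integral {x0..x} gam"
  using set_borel_integral_eq_integral[OF G_finite[rule_format, OF assms]] by (auto simp: G_fun_def)

lemma G_x0: "G x0 = 0" using G_int(2)[of x0] by simp

lemma G_nonneg: "x \<ge> x0 \<Longrightarrow> G x \<ge> 0"
  using G_int[of x] gam_nonneg by (auto intro!: integral_nonneg)

lemma G_cont: "continuous_on {x0..X} G"
proof (cases "x0 \<le> X")
  case True
  show ?thesis
    by (rule continuous_on_eq[OF indefinite_integral_continuous_1[OF G_int(1)[OF True]]])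
       (use G_int in auto)
next
  case False then show ?thesis by simp
qed

lemma G_deriv: assumes "y > x0" shows "(G has_real_derivative gam y) (at y)"
proof (rule deriv_integral_at[where b="(x0+y)/2" and B="y+1" and C="G ((x0+y)/2)"])
  show "continuous_on {(x0 + y) / 2..y + 1} gam"
    by (intro continuous_at_imp_continuous_on ballI gam_cont(2)) (use assms in auto)
  fix z assume z: "z \<in> {(x0 + y) / 2..y + 1}"
  have "integral {x0..(x0+y)/2} gam + integral {(x0+y)/2..z} gam = integral {x0..z} gam"
    by (rule Henstock_Kurzweil_Integration.integral_combine) (use z assms G_int(1)[of z] in auto)
  then show "G z = G ((x0 + y) / 2) + integral {(x0 + y) / 2..z} gam"
    using G_int(2)[of z] G_int(2)[of "(x0+y)/2"] z assms by auto
qed (use assms in auto)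

lemma G_strict: "strict_mono_on {x0..} G"
proof (rule strict_mono_onI)
  fix y z assume yz: "y \<in> {x0..}" "z \<in> {x0..}" "y < z"
  define m where "m = (y + z) / 2"
  have der: "\<exists>d. DERIV G x :> d \<and> d > 0" if "x > x0" for x
    using G_deriv[OF that] gam_cont(1)[OF that] by blast
  have "G m < G z"
    by (rule DERIV_pos_imp_increasing[of m z G]) (use yz der in \<open>auto simp: m_def\<close>)
  moreover have "G y \<le> G m"
  proof (cases "y = x0")
    case True then show ?thesis using G_x0 G_nonneg[of m] yz by (auto simp: m_def)
  next
    case False
    then have "G y < G m"
      by (intro DERIV_pos_imp_increasing[of y m G]) (use yz der in \<open>auto simp: m_def\<close>)
    then show ?thesis by simp
  qed
  ultimately show "G y < G z" by simp
qed

lemma G_unb: "\<exists>x\<ge>x0. G x \<ge> M"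
proof (rule ccontr)
  assume "\<not> ?thesis"
  then have bnd: "\<And>x. x \<ge> x0 \<Longrightarrow> G x < M" by force
  define S where "S n = {x0..x0 + real n}" for n :: nat
  define fn where "fn n x = ennreal (indicator (S n) x * gam x)" for n x
  have integ: "integrable lborel (\<lambda>x. indicator (S n) x * gam x)" for n
    using G_finite[rule_format, of "x0 + real n"] by (simp add: set_integrable_def S_def)
  have meas: "fn n \<in> borel_measurable lborel" for n
    unfolding fn_def by (rule measurable_compose[OF borel_measurable_integrable[OF integ] measurable_ennreal])
  have nn: "indicator (S n) x * gam x \<ge> 0" for n x
    using gam_nonneg[of x] by (auto simp: S_def indicator_def)
  have inc: "incseq fn"
  proof (rule incseq_SucI, rule le_funI)
    fix n x
    show "fn n x \<le> fn (Suc n) x"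
      using gam_nonneg[of x] by (auto simp: fn_def S_def indicator_def)
  qed
  have sup: "(SUP n. fn n x) = ennreal (gam x) * indicator {x0..} x" for x
  proof (cases "x \<ge> x0")
    case True
    have le: "fn n x \<le> ennreal (gam x)" for n
      by (auto simp: fn_def indicator_def)
    have "fn (nat \<lceil>x - x0\<rceil>) x = ennreal (gam x)"
      using True by (auto simp: fn_def S_def indicator_def) linarith
    then have "(SUP n. fn n x) = ennreal (gam x)"
      by (intro antisym SUP_least le) (metis SUP_upper UNIV_I)
    then show ?thesis using True by simp
  next
    case False then show ?thesis by (auto simp: fn_def S_def indicator_def)
  qed
  have int_eq: "integral\<^sup>N lborel (fn n) = ennreal (G (x0 + real n))" for n
  proof -
    have "integral\<^sup>N lborel (fn n) = ennreal (integral\<^sup>L lborel (\<lambda>x. indicator (S n) x * gam x))"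
      unfolding fn_def by (rule nn_integral_eq_integral[OF integ]) (use nn in auto)
    also have "integral\<^sup>L lborel (\<lambda>x. indicator (S n) x * gam x) = G (x0 + real n)"
      by (simp add: G_fun_def set_lebesgue_integral_def S_def)
    finally show ?thesis .
  qed
  have "(\<integral>\<^sup>+ s\<in>{x0..}. ennreal (gam s) \<partial>lborel) = (\<integral>\<^sup>+ x. (SUP n. fn n x) \<partial>lborel)"
    by (simp add: sup)
  also have "\<dots> = (SUP n. integral\<^sup>N lborel (fn n))"
    by (rule nn_integral_monotone_convergence_SUP[OF inc meas])
  also have "\<dots> \<le> ennreal M"
    proof (rule SUP_least)
    fix n :: nat
    have "G (x0 + real n) \<le> M" using bnd[of "x0 + real n"] by simp
    then show "integral\<^sup>N lborel (fn n) \<le> ennreal M" unfolding int_eq by (rule ennreal_leI)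
  qed
  finally show False using G_infinite by (simp add: top_unique)
qed

lemmas Gi_facts = inv_facts[OF G_cont G_strict G_unb G_inv_def, unfolded G_x0]


lemma psi_cont: assumes "y > 0" shows "psi y > 0" "isCont psi y"
proof -
  have g: "isCont Gi y" "Gi y > x0" using Gi_facts(4)[OF assms] by auto
  have p: "isCont pinv (Gi y)" "pinv (Gi y) > 0" using pinv_facts(4)[of "Gi y"] g x0_ge by auto
  then show "psi y > 0" using w_pos by auto
  have "isCont (\<lambda>s. w (pinv (Gi s))) y"
    by (rule isCont_o2[OF g(1)], rule isCont_o2[OF p(1) w_isCont[OF p(2)]])
  then show "isCont psi y" using w_pos p by (intro continuous_intros) auto
qed

lemma psi_cont_on: "0 < p \<Longrightarrow> continuous_on {p..q} psi"
  by (intro continuous_at_imp_continuous_on ballI psi_cont(2)) auto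

lemma Psi_repr:
  assumes "0 < b" "b \<le> z" "b \<le> x1"
  shows "Psi z = integral {b..z} psi - integral {b..x1} psi"
proof (cases "x1 \<le> z")
  case True
  have "Psi z = (LINT s:{x1..z}|lborel. psi s)"
    unfolding Psi_fun_def by (rule interval_integral_Icc[OF True])
  also have "\<dots> = integral {x1..z} psi"
    by (rule lint_eq_integral(1)[OF psi_cont_on]) (use assms x1_pos in auto)
  also have "integral {b..x1} psi + integral {x1..z} psi = integral {b..z} psi"
    by (rule Henstock_Kurzweil_Integration.integral_combine)
       (use assms True lint_eq_integral(2)[OF psi_cont_on, of b z] in auto)
  ultimately show ?thesis by simp
next
  case False
  have "Psi z = - (LBINT s=z..x1. psi s)"
    unfolding Psi_fun_def by (rule interval_integral_endpoints_reverse)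
  also have "(LBINT s=z..x1. psi s) = (LINT s:{z..x1}|lborel. psi s)"
    by (rule interval_integral_Icc) (use False in simp)
  also have "\<dots> = integral {z..x1} psi"
    by (rule lint_eq_integral(1)[OF psi_cont_on]) (use assms in auto)
  also have "integral {b..z} psi + integral {z..x1} psi = integral {b..x1} psi"
    by (rule Henstock_Kurzweil_Integration.integral_combine)
       (use assms False lint_eq_integral(2)[OF psi_cont_on, of b x1] in auto)
  ultimately show ?thesis by simp
qed

lemma Psi_deriv: assumes "y > 0" shows "(Psi has_real_derivative psi y) (at y)"
proof (rule deriv_integral_at[where b="min y x1 / 2" and B="y+1" and C="- integral {min y x1 / 2..x1} psi"])
  show "continuous_on {min y x1 / 2..y + 1} psi"
    by (rule psi_cont_on) (use assms x1_pos in auto)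
  fix z assume "z \<in> {min y x1 / 2..y + 1}"
  then show "Psi z = - integral {min y x1 / 2..x1} psi + integral {min y x1 / 2..z} psi"
    using Psi_repr[of "min y x1 / 2" z] assms x1_pos by auto
qed (use assms x1_pos in auto)

lemma Psi_less: assumes "0 < y" "y < z" shows "Psi y < Psi z"
proof -
  have der: "\<exists>d. DERIV Psi x :> d \<and> d > 0" if "x > 0" for x
    using Psi_deriv[OF that] psi_cont(1)[OF that] by blast
  show ?thesis by (rule DERIV_pos_imp_increasing[of y z Psi]) (use assms der in auto)
qed

lemma Psi_le: "0 < y \<Longrightarrow> y \<le> z \<Longrightarrow> Psi y \<le> Psi z"
  using Psi_less[of y z] by (cases "y = z") auto

lemma Psi_isCont: "y > 0 \<Longrightarrow> isCont Psi y"
  using Psi_deriv DERIV_isCont by blast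

lemma Psi_cont_on: "0 < p \<Longrightarrow> continuous_on {p..q} Psi"
  by (intro continuous_at_imp_continuous_on ballI Psi_isCont) auto

lemma Psii_Psi: "y > 0 \<Longrightarrow> Psii (Psi y) = y"
proof -
  have "inj_on Psi {0<..}"
    by (rule strict_mono_on_imp_inj_on, rule strict_mono_onI) (use Psi_less in auto)
  then show "y > 0 \<Longrightarrow> Psii (Psi y) = y" unfolding Psi_inv_def by (rule the_inv_into_f_f) auto
qed


lemma bihari:
  fixes F Gg u :: "real \<Rightarrow> real" and a cT :: real
  assumes a: "a \<ge> 0"
    and Fc: "continuous_on {0..a} F" and Gc: "continuous_on {0..a} Gg" and uc: "continuous_on {0..a} u"
    and Fn: "\<forall>s\<in>{0..a}. F s \<ge> 0" and Gn: "\<forall>s\<in>{0..a}. Gg s \<ge> 0" and un: "\<forall>s\<in>{0..a}. u s \<ge> 0"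
    and cT: "cT > x0"
    and ineq: "\<forall>s\<in>{0..a}. phi (u s) \<le> cT + integral {0..s} (\<lambda>r. F r * eta (u r) * w (u r) + Gg r * eta (u r))"
    and zin: "Psi (G cT + integral {0..a} Gg) + integral {0..a} F \<in> Psi ` {0<..}"
  shows "cT + integral {0..a} (\<lambda>r. F r * eta (u r) * w (u r) + Gg r * eta (u r))
           \<le> Gi (Psii (Psi (G cT + integral {0..a} Gg) + integral {0..a} F))"
proof -
  define H where "H r = F r * eta (u r) * w (u r) + Gg r * eta (u r)" for r
  have H_eq: "(\<lambda>r. F r * eta (u r) * w (u r) + Gg r * eta (u r)) = H" by (simp add: H_def fun_eq_iff)
  note ineqH = ineq[unfolded H_eq]
  have ec: "continuous_on {0..a} (\<lambda>r. eta (u r))"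
    by (rule continuous_on_compose2[OF eta_cont uc]) (use un in auto)
  have wc: "continuous_on {0..a} (\<lambda>r. w (u r))"
    by (rule continuous_on_compose2[OF w_cont uc]) (use un in auto)
  have Hc: "continuous_on {0..a} H"
    unfolding H_def by (intro continuous_on_add continuous_on_mult Fc Gc ec wc)
  have Hn: "H r \<ge> 0" if "r \<in> {0..a}" for r
    using that Fn Gn un eta_nonneg w_nonneg unfolding H_def by (auto intro!: add_nonneg_nonneg mult_nonneg_nonneg)
  define V where "V x = cT + integral {0..x} H" for x
  define I where "I x = integral {0..x} Gg" for x
  define J where "J x = integral {0..x} F" for x
  define Q where "Q x = G (V x) + (I a - I x)" for x
  define K where "K x = Psi (Q x) - J x" for x
  have Hint: "H integrable_on {0..x}" if "x \<le> a" for x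
    using lint_eq_integral(2)[OF continuous_on_subset[OF Hc]] that by auto
  have Gint: "Gg integrable_on {0..x}" if "x \<le> a" for x
    using lint_eq_integral(2)[OF continuous_on_subset[OF Gc]] that by auto
  have V_ge: "V x \<ge> cT" if "x \<in> {0..a}" for x
    unfolding V_def using Hint[of x] Hn that by (auto intro!: integral_nonneg)
  have Ia: "I a - I x \<ge> 0" if "x \<in> {0..a}" for x
  proof -
    have "I x + integral {x..a} Gg = I a" unfolding I_def
      by (rule Henstock_Kurzweil_Integration.integral_combine) (use that Gint[of a] in auto)
    moreover have "integral {x..a} Gg \<ge> 0"
      by (rule integral_nonneg) (use that Gn integrable_on_subinterval[OF Gint[of a], of x a] in auto)
    ultimately show ?thesis by simp
  qed
  have der: "(K has_real_derivative psi (Q x) * (gam (V x) * H x + (0 - Gg x)) - F x) (at x within {0..a})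
           \<and> psi (Q x) * (gam (V x) * H x + (0 - Gg x)) - F x \<le> 0"
    if x: "x \<in> {0..a}" for x
  proof
    have dV: "(V has_real_derivative 0 + H x) (at x within {0..a})"
      unfolding V_def by (rule DERIV_add[OF DERIV_const integral_has_real_derivative[OF Hc x]])
    have dI: "(I has_real_derivative Gg x) (at x within {0..a})"
      unfolding I_def by (rule integral_has_real_derivative[OF Gc x])
    have dJ: "(J has_real_derivative F x) (at x within {0..a})"
      unfolding J_def by (rule integral_has_real_derivative[OF Fc x])
    have Vx: "V x > x0" using V_ge[OF x] cT by simp
    have dGV: "((\<lambda>x. G (V x)) has_real_derivative gam (V x) * (0 + H x)) (at x within {0..a})"
      by (rule DERIV_chain'[OF dV G_deriv[OF Vx]])
    have dQ: "(Q has_real_derivative gam (V x) * H x + (0 - Gg x)) (at x within {0..a})"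
      unfolding Q_def using DERIV_add[OF dGV DERIV_diff[OF DERIV_const dI]] by simp
    have GV: "G (V x) > 0" using G_strict Vx G_x0 by (auto dest: strict_mono_onD[of _ G x0 "V x"])
    have Qpos: "Q x > 0" unfolding Q_def using GV Ia[OF x] by simp
    have dPQ: "((\<lambda>x. Psi (Q x)) has_real_derivative psi (Q x) * (gam (V x) * H x + (0 - Gg x))) (at x within {0..a})"
      using DERIV_chain'[OF dQ Psi_deriv[OF Qpos]] by (simp add: mult.commute)
    show "(K has_real_derivative psi (Q x) * (gam (V x) * H x + (0 - Gg x)) - F x) (at x within {0..a})"
      unfolding K_def by (rule DERIV_diff[OF dPQ dJ])
    define U where "U = pinv (V x)"
    have Vphi: "V x \<ge> phi 0" using Vx x0_ge by simp
    have uU: "u x \<le> U" unfolding U_def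
      by (rule pinv_le) (use un x ineqH in \<open>auto simp: V_def\<close>)
    have U0: "U > 0" unfolding U_def using pinv_facts(4)[of "V x"] Vx x0_ge by auto
    have ux: "u x \<ge> 0" using un x by auto
    have eU: "eta U > 0" "w U > 0" using U0 eta_pos w_pos by auto
    have eu: "eta (u x) \<le> eta U" "w (u x) \<le> w U" "eta (u x) \<ge> 0" "w (u x) \<ge> 0"
      using mono_onD[OF eta_mono, of "u x" U] mono_onD[OF w_mono, of "u x" U] uU ux U0 eta_nonneg w_nonneg
      by auto
    have Fx: "F x \<ge> 0" "Gg x \<ge> 0" using Fn Gn x by auto
    have gV: "gam (V x) = 1 / eta U" unfolding U_def by simp
    define e where "e = eta (u x) / eta U"
    have e: "0 \<le> e" "e \<le> 1" unfolding e_def using eu eU by auto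
    have "gam (V x) * H x = e * (F x * w (u x) + Gg x)"
      unfolding gV e_def H_def by (simp add: field_simps)
    also have "\<dots> \<le> 1 * (F x * w (u x) + Gg x)"
      by (rule mult_right_mono) (use e Fx eu in auto)
    finally have Qd: "gam (V x) * H x + (0 - Gg x) \<le> F x * w U"
      using mult_left_mono[OF eu(2) Fx(1)] by simp
    have GQ: "Gi (Q x) \<ge> V x"
    proof -
      have "Gi (G (V x)) \<le> Gi (Q x)"
        by (rule Gi_facts(3)) (use GV Ia[OF x] in \<open>auto simp: Q_def\<close>)
      then show ?thesis using Gi_facts(1)[of "V x"] Vx by simp
    qed
    have GQ0: "Gi (Q x) \<ge> x0" using Gi_facts(2)[of "Q x"] Qpos by simp
    have pQ: "pinv (Gi (Q x)) \<ge> U" unfolding U_def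
      by (rule pinv_facts(3)) (use Vphi GQ in auto)
    have wQ: "w (pinv (Gi (Q x))) \<ge> w U"
      using mono_onD[OF w_mono, of U "pinv (Gi (Q x))"] pQ U0 by auto
    have psiQ: "psi (Q x) \<le> 1 / w U" "psi (Q x) > 0"
      using wQ eU psi_cont(1)[OF Qpos] by (auto simp: frac_le)
    show "psi (Q x) * (gam (V x) * H x + (0 - Gg x)) - F x \<le> 0"
    proof (cases "gam (V x) * H x + (0 - Gg x) \<ge> 0")
      case True
      have "psi (Q x) * (gam (V x) * H x + (0 - Gg x)) \<le> (1 / w U) * (F x * w U)"
        by (rule mult_mono) (use psiQ Qd True eU Fx in auto)
      also have "\<dots> = F x" using eU by simp
      finally show ?thesis by simp
    next
      case False
      have "psi (Q x) * (gam (V x) * H x + (0 - Gg x)) \<le> 0"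
        by (rule mult_nonneg_nonpos) (use psiQ(2) False in linarith)+
      then show ?thesis using Fx by simp
    qed
  qed
  have Kc: "continuous_on {0..a} K"
    unfolding continuous_on_eq_continuous_within
    using der by (blast intro: DERIV_continuous)
  have "K a \<le> K 0"
  proof (rule DERIV_nonpos_imp_decreasing_open[OF a _ Kc])
    fix x assume x: "0 < x" "x < a"
    have "at x within {0..a} = at x" by (rule at_within_interior) (use x in auto)
    then show "\<exists>y. DERIV K x :> y \<and> y \<le> 0" using der[of x] x by auto
  qed
  moreover have "K 0 = Psi (G cT + integral {0..a} Gg)"
    by (simp add: K_def Q_def V_def I_def J_def)
  moreover have "K a = Psi (G (V a)) - integral {0..a} F"
    by (simp add: K_def Q_def J_def)
  ultimately have PV: "Psi (G (V a)) \<le> Psi (G cT + integral {0..a} Gg) + integral {0..a} F" by simp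
  from zin obtain y where y: "y > 0" "Psi (G cT + integral {0..a} Gg) + integral {0..a} F = Psi y" by auto
  have Va: "V a > x0" using V_ge[of a] a cT by simp
  have GVa: "G (V a) \<ge> 0" using G_nonneg Va by simp
  have "G (V a) \<le> y"
  proof (rule ccontr)
    assume "\<not> ?thesis"
    then have "Psi y < Psi (G (V a))" using Psi_less[OF y(1)] by simp
    then show False using PV y by simp
  qed
  then have "Gi (G (V a)) \<le> Gi y" by (rule Gi_facts(3)[OF GVa])
  then have "V a \<le> Gi y" using Gi_facts(1)[of "V a"] Va by simp
  then show ?thesis using y Psii_Psi[OF y(1)] by (simp add: V_def H_eq)
qed

end
theorem theorem1:
  fixes f g :: "real \<Rightarrow> real \<Rightarrow> real"
    and phi c eta w alpha u :: "real \<Rightarrow> real"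
    and x0 x1 :: real
  assumes f_cont: "continuous_on ({0..} \<times> {0..}) (\<lambda>(t, s). f t s)"
    and f_nonneg: "\<forall>t\<ge>0. \<forall>s\<ge>0. f t s \<ge> 0"
    and f_mono: "\<forall>s\<ge>0. mono_on {0..} (\<lambda>t. f t s)"
    and g_cont: "continuous_on ({0..} \<times> {0..}) (\<lambda>(t, s). g t s)"
    and g_nonneg: "\<forall>t\<ge>0. \<forall>s\<ge>0. g t s \<ge> 0"
    and g_mono: "\<forall>s\<ge>0. mono_on {0..} (\<lambda>t. g t s)"
    and phi_cont: "continuous_on {0..} phi"
    and phi_nonneg: "\<forall>x\<ge>0. phi x \<ge> 0"
    and phi_strict: "strict_mono_on {0..} phi"
    and phi_lim: "filterlim phi at_top at_top"
    and c_cont: "continuous_on {0..} c"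
    and c_pos: "\<forall>t\<ge>0. c t > 0"
    and c_mono: "mono_on {0..} c"
    and eta_cont: "continuous_on {0..} eta"
    and eta_nonneg: "\<forall>x\<ge>0. eta x \<ge> 0"
    and eta_mono: "mono_on {0..} eta"
    and eta_pos: "\<forall>x>0. eta x > 0"
    and w_cont: "continuous_on {0..} w"
    and w_nonneg: "\<forall>x\<ge>0. w x \<ge> 0"
    and w_mono: "mono_on {0..} w"
    and w_pos: "\<forall>x>0. w x > 0"
    and x0_ge: "phi 0 \<le> x0"
    and x0_less: "x0 < c 0"
    and G_finite: "\<forall>x\<ge>x0. set_integrable lborel {x0..x} (\<lambda>s. 1 / eta (phi_inv phi s))"
    and G_infinite: "(\<integral>\<^sup>+ s\<in>{x0..}. ennreal (1 / eta (phi_inv phi s)) \<partial>lborel) = \<infinity>"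
    and x1_pos: "x1 > 0"
    and alpha_C1: "\<exists>alpha'. continuous_on {0..} alpha' \<and>
                     (\<forall>t\<ge>0. (alpha has_real_derivative alpha' t) (at t within {0..}))"
    and alpha_nonneg: "\<forall>t\<ge>0. alpha t \<ge> 0"
    and alpha_mono: "mono_on {0..} alpha"
    and alpha_le: "\<forall>t\<ge>0. alpha t \<le> t"
    and u_cont: "continuous_on {0..} u"
    and u_nonneg: "\<forall>t\<ge>0. u t \<ge> 0"
    and u_ineq: "\<forall>t\<ge>0. phi (u t) \<le> c t +
          (LINT s:{0..alpha t}|lborel. f t s * eta (u s) * w (u s) + g t s * eta (u s))"
  shows "\<exists>\<tau>>0. \<forall>t\<in>{0..\<tau>}.
     (let p = G_fun eta phi x0 (c t) + (LINT s:{0..alpha t}|lborel. g t s);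
          z = Psi_fun w eta phi x0 x1 p + (LINT s:{0..alpha t}|lborel. f t s)
      in z \<in> Psi_fun w eta phi x0 x1 ` {0<..} \<and>
         u t \<le> phi_inv phi (G_inv eta phi x0 (Psi_inv w eta phi x0 x1 z)))"
  proof -
  interpret B: bih phi eta w x0 x1
    by (rule bih.intro; fact phi_cont phi_strict phi_lim eta_cont eta_nonneg eta_mono eta_pos
          w_cont w_mono w_pos w_nonneg x0_ge G_finite G_infinite x1_pos)
  have contf: "continuous_on {0..} (f T)" if "T \<ge> 0" for T
  proof -
    have "continuous_on {0..} (\<lambda>s. (\<lambda>(t, s). f t s) (T, s))"
      by (rule continuous_on_compose2[OF f_cont]) (use that in \<open>auto intro!: continuous_intros\<close>)
    then show ?thesis by simp
  qed
  have contg: "continuous_on {0..} (g T)" if "T \<ge> 0" for T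
  proof -
    have "continuous_on {0..} (\<lambda>s. (\<lambda>(t, s). g t s) (T, s))"
      by (rule continuous_on_compose2[OF g_cont]) (use that in \<open>auto intro!: continuous_intros\<close>)
    then show ?thesis by simp
  qed
  have ec: "continuous_on {0..} (\<lambda>r. eta (u r))"
    by (rule continuous_on_compose2[OF eta_cont u_cont]) (use u_nonneg in auto)
  have wc: "continuous_on {0..} (\<lambda>r. w (u r))"
    by (rule continuous_on_compose2[OF w_cont u_cont]) (use u_nonneg in auto)
  define Ht where "Ht t r = f t r * eta (u r) * w (u r) + g t r * eta (u r)" for t r
  have Htc: "continuous_on {0..} (Ht t)" if "t \<ge> 0" for t
    unfolding Ht_def by (intro continuous_on_add continuous_on_mult contf contg ec wc that)
  have Htn: "Ht t r \<ge> 0" if "t \<ge> 0" "r \<ge> 0" for t r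
    unfolding Ht_def using that f_nonneg g_nonneg u_nonneg eta_nonneg w_nonneg
    by (auto intro!: add_nonneg_nonneg mult_nonneg_nonneg)
  have Ht_eq: "(\<lambda>r. f t r * eta (u r) * w (u r) + g t r * eta (u r)) = Ht t" for t
    by (simp add: Ht_def fun_eq_iff)
  have Htint: "Ht t integrable_on {0..b}" if "t \<ge> 0" for t b
    using lint_eq_integral(2)[OF continuous_on_subset[OF Htc[OF that]]] by auto
  have Lf: "(LINT s:{0..b}|lborel. f t s) = integral {0..b} (f t)" if "t \<ge> 0" for t b
    using lint_eq_integral(1)[OF continuous_on_subset[OF contf[OF that]]] by auto
  have Lg: "(LINT s:{0..b}|lborel. g t s) = integral {0..b} (g t)" if "t \<ge> 0" for t b
    using lint_eq_integral(1)[OF continuous_on_subset[OF contg[OF that]]] by auto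
  have LH: "(LINT s:{0..b}|lborel. f t s * eta (u s) * w (u s) + g t s * eta (u s)) = integral {0..b} (Ht t)"
    if "t \<ge> 0" for t b
    unfolding Ht_eq using lint_eq_integral(1)[OF continuous_on_subset[OF Htc[OF that]]] by auto
  have fint: "f t integrable_on {0..b}" if "t \<ge> 0" for t b
    using lint_eq_integral(2)[OF continuous_on_subset[OF contf[OF that]]] by auto
  have gint: "g t integrable_on {0..b}" if "t \<ge> 0" for t b
    using lint_eq_integral(2)[OF continuous_on_subset[OF contg[OF that]]] by auto
  have int_mono: "integral {0..b} h \<le> integral {0..b'} h"
    if "0 \<le> b" "b \<le> b'" "h integrable_on {0..b'}" "\<And>r. r \<in> {0..b'} \<Longrightarrow> h r \<ge> 0" for b b' and h :: "real \<Rightarrow> real"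
  proof -
    have "integral {0..b} h + integral {b..b'} h = integral {0..b'} h"
      by (rule Henstock_Kurzweil_Integration.integral_combine) (use that in auto)
    moreover have "integral {b..b'} h \<ge> 0"
      by (rule integral_nonneg) (use that integrable_on_subinterval[OF that(3), of b b'] in auto)
    ultimately show ?thesis by simp
  qed
  have cx0: "c t > x0" if "t \<ge> 0" for t
    using mono_onD[OF c_mono, of 0 t] that x0_less by auto
  define zz where "zz t = Psi_fun w eta phi x0 x1 (G_fun eta phi x0 (c t) + (LINT s:{0..alpha t}|lborel. g t s))
       + (LINT s:{0..alpha t}|lborel. f t s)" for t
  have main: "u T \<le> phi_inv phi (G_inv eta phi x0 (Psi_inv w eta phi x0 x1 (zz T)))"
    if T: "T \<ge> 0" and zin: "zz T \<in> Psi_fun w eta phi x0 x1 ` {0<..}" for T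
  proof -
    define a where "a = alpha T"
    have a: "0 \<le> a" "a \<le> T" using alpha_nonneg alpha_le T by (auto simp: a_def)
    have ineq: "\<forall>s\<in>{0..a}. phi (u s) \<le> c T + integral {0..s} (\<lambda>r. f T r * eta (u r) * w (u r) + g T r * eta (u r))"
    proof
      fix s assume s: "s \<in> {0..a}"
      have sT: "0 \<le> s" "s \<le> T" using s a by auto
      have as: "0 \<le> alpha s" "alpha s \<le> s" using alpha_nonneg alpha_le sT by auto
      have "phi (u s) \<le> c s + integral {0..alpha s} (Ht s)"
        using u_ineq[rule_format, OF sT(1)] LH[OF sT(1)] by simp
      also have "integral {0..alpha s} (Ht s) \<le> integral {0..alpha s} (Ht T)"
      proof (rule integral_le[OF Htint[OF sT(1)] Htint[OF T]])
        fix r assume r: "r \<in> {0..alpha s}"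
        have fr: "f s r \<le> f T r" "g s r \<le> g T r"
          using mono_onD[OF f_mono[rule_format, of r], of s T] mono_onD[OF g_mono[rule_format, of r], of s T] r sT by auto
        have nn: "eta (u r) \<ge> 0" "w (u r) \<ge> 0" using r u_nonneg eta_nonneg w_nonneg by auto
        show "Ht s r \<le> Ht T r" unfolding Ht_def
          by (intro add_mono mult_right_mono fr nn mult_nonneg_nonneg)
      qed
      also have "integral {0..alpha s} (Ht T) \<le> integral {0..s} (Ht T)"
        by (rule int_mono) (use as Htint[OF T] Htn[OF T] in auto)
      also have "c s \<le> c T" using mono_onD[OF c_mono] sT by auto
      ultimately show "phi (u s) \<le> c T + integral {0..s} (\<lambda>r. f T r * eta (u r) * w (u r) + g T r * eta (u r))"
        unfolding Ht_eq by linarith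
    qed
    have zT: "zz T = Psi_fun w eta phi x0 x1 (G_fun eta phi x0 (c T) + integral {0..a} (g T)) + integral {0..a} (f T)"
      unfolding zz_def a_def using Lf[OF T] Lg[OF T] by simp
    have bi: "c T + integral {0..a} (\<lambda>r. f T r * eta (u r) * w (u r) + g T r * eta (u r))
           \<le> G_inv eta phi x0 (Psi_inv w eta phi x0 x1 (zz T))"
      unfolding zT
    proof (rule B.bihari[OF a(1)])
      show "continuous_on {0..a} (f T)" by (rule continuous_on_subset[OF contf[OF T]]) auto
      show "continuous_on {0..a} (g T)" by (rule continuous_on_subset[OF contg[OF T]]) auto
      show "continuous_on {0..a} u" by (rule continuous_on_subset[OF u_cont]) auto
      show "\<forall>s\<in>{0..a}. f T s \<ge> 0" using f_nonneg T by simp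
      show "\<forall>s\<in>{0..a}. g T s \<ge> 0" using g_nonneg T by simp
      show "\<forall>s\<in>{0..a}. u s \<ge> 0" using u_nonneg by simp
      show "c T > x0" by (rule cx0[OF T])
      show "\<forall>s\<in>{0..a}. phi (u s) \<le> c T + integral {0..s} (\<lambda>r. f T r * eta (u r) * w (u r) + g T r * eta (u r))"
        by (rule ineq)
      show "Psi_fun w eta phi x0 x1 (G_fun eta phi x0 (c T) + integral {0..a} (g T)) + integral {0..a} (f T)
             \<in> Psi_fun w eta phi x0 x1 ` {0<..}" using zin unfolding zT .
    qed
    have pu: "phi (u T) \<le> c T + integral {0..a} (Ht T)"
      using u_ineq[rule_format, OF T] LH[OF T] by (simp add: a_def)
    have p0: "phi 0 \<le> phi (u T)" using B.pinv_facts(5)[of 0 "u T"] u_nonneg T by auto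
    have "u T \<le> phi_inv phi (c T + integral {0..a} (Ht T))"
      by (rule B.pinv_le) (use u_nonneg T pu in auto)
    also have "\<dots> \<le> phi_inv phi (G_inv eta phi x0 (Psi_inv w eta phi x0 x1 (zz T)))"
      by (rule B.pinv_facts(3)) (use p0 pu bi[unfolded Ht_eq] in auto)
    finally show ?thesis .
  qed
  have a0: "alpha 0 = 0" using alpha_nonneg alpha_le by force
  define p0 where "p0 = G_fun eta phi x0 (c 0)"
  have p0pos: "p0 > 0"
    using strict_mono_onD[OF B.G_strict, of x0 "c 0"] x0_less B.G_x0 by (auto simp: p0_def)
  define Af where "Af t = integral {0..alpha t} (f t)" for t
  define Ag where "Ag t = integral {0..alpha t} (g t)" for t
  have zz_eq: "zz t = Psi_fun w eta phi x0 x1 (G_fun eta phi x0 (c t) + Ag t) + Af t" if "t \<ge> 0" for t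
    unfolding zz_def Af_def Ag_def using Lf[OF that] Lg[OF that] by simp
  have z0: "zz 0 = Psi_fun w eta phi x0 x1 p0"
    using zz_eq[of 0] by (simp add: Af_def Ag_def a0 p0_def)
  have Afb: "0 \<le> Af t \<and> Af t \<le> integral {0..t} (f 1)" if t: "t \<in> {0..1}" for t
  proof
    have at: "0 \<le> alpha t" "alpha t \<le> t" using alpha_nonneg alpha_le t by auto
    show "0 \<le> Af t" unfolding Af_def
      by (rule integral_nonneg[OF fint]) (use t f_nonneg in auto)
    have "Af t \<le> integral {0..alpha t} (f 1)" unfolding Af_def
    proof (rule integral_le[OF fint fint])
      fix r assume r: "r \<in> {0..alpha t}"
      show "f t r \<le> f 1 r" using mono_onD[OF f_mono[rule_format, of r], of t 1] r t at by auto
    qed (use t in auto)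
    also have "\<dots> \<le> integral {0..t} (f 1)"
      by (rule int_mono) (use at fint[of 1 t] f_nonneg in auto)
    finally show "Af t \<le> integral {0..t} (f 1)" .
  qed
  have Agb: "0 \<le> Ag t \<and> Ag t \<le> integral {0..t} (g 1)" if t: "t \<in> {0..1}" for t
  proof
    have at: "0 \<le> alpha t" "alpha t \<le> t" using alpha_nonneg alpha_le t by auto
    show "0 \<le> Ag t" unfolding Ag_def
      by (rule integral_nonneg[OF gint]) (use t g_nonneg in auto)
    have "Ag t \<le> integral {0..alpha t} (g 1)" unfolding Ag_def
    proof (rule integral_le[OF gint gint])
      fix r assume r: "r \<in> {0..alpha t}"
      show "g t r \<le> g 1 r" using mono_onD[OF g_mono[rule_format, of r], of t 1] r t at by auto
    qed (use t in auto)
    also have "\<dots> \<le> integral {0..t} (g 1)"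
      by (rule int_mono) (use at gint[of 1 t] g_nonneg in auto)
    finally show "Ag t \<le> integral {0..t} (g 1)" .
  qed
  define FF where "FF = at (0::real) within {0..1}"
  have ev01: "eventually (\<lambda>t. t \<in> {0..1}) FF"
    unfolding FF_def by (simp add: eventually_at_filter)
  have limi: "((\<lambda>t. integral {0..t} h) \<longlongrightarrow> 0) FF" if "h integrable_on {0..1}" for h :: "real \<Rightarrow> real"
  proof -
    have "continuous_on {0..1} (\<lambda>t. integral {0..t} h)"
      by (rule indefinite_integral_continuous_1[OF that])
    moreover have "(0::real) \<in> {0..1}" by simp
    ultimately have "((\<lambda>t. integral {0..t} h) \<longlongrightarrow> integral {0..0} h) FF"
      unfolding continuous_on_def FF_def by blast
    then show ?thesis by simp
  qed
  have AfL: "(Af \<longlongrightarrow> 0) FF"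
    by (rule tendsto_sandwich[OF _ _ tendsto_const limi[OF fint]])
       (use ev01 Afb in \<open>auto elim!: eventually_mono\<close>)
  have AgL: "(Ag \<longlongrightarrow> 0) FF"
    by (rule tendsto_sandwich[OF _ _ tendsto_const limi[OF gint]])
       (use ev01 Agb in \<open>auto elim!: eventually_mono\<close>)
  have cL: "(c \<longlongrightarrow> c 0) FF"
  proof -
    have "(c \<longlongrightarrow> c 0) (at 0 within {0..})"
      using c_cont unfolding continuous_on_def by auto
    then show ?thesis unfolding FF_def by (rule tendsto_within_subset) auto
  qed
  have GcL: "((\<lambda>t. G_fun eta phi x0 (c t)) \<longlongrightarrow> p0) FF"
    unfolding p0_def by (rule isCont_tendsto_compose[OF DERIV_isCont[OF B.G_deriv[OF x0_less]] cL])
  have pL: "((\<lambda>t. G_fun eta phi x0 (c t) + Ag t) \<longlongrightarrow> p0) FF"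
    using tendsto_add[OF GcL AgL] by simp
  have zL: "((\<lambda>t. Psi_fun w eta phi x0 x1 (G_fun eta phi x0 (c t) + Ag t) + Af t) \<longlongrightarrow> Psi_fun w eta phi x0 x1 p0) FF"
    using tendsto_add[OF isCont_tendsto_compose[OF B.Psi_isCont[OF p0pos] pL] AfL] by simp
  have Pl: "Psi_fun w eta phi x0 x1 p0 < Psi_fun w eta phi x0 x1 (p0 + 1)"
    by (rule B.Psi_less) (use p0pos in auto)
  have "eventually (\<lambda>t. Psi_fun w eta phi x0 x1 (G_fun eta phi x0 (c t) + Ag t) + Af t < Psi_fun w eta phi x0 x1 (p0 + 1)) FF"
    by (rule order_tendstoD(2)[OF zL Pl])
  then obtain d where d: "d > 0" and dP: "\<And>t. t \<in> {0..1} \<Longrightarrow> t \<noteq> 0 \<Longrightarrow> dist t 0 < d \<Longrightarrow>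
      Psi_fun w eta phi x0 x1 (G_fun eta phi x0 (c t) + Ag t) + Af t < Psi_fun w eta phi x0 x1 (p0 + 1)"
    unfolding FF_def eventually_at by blast
  define \<tau> where "\<tau> = min (d/2) 1"
  have zin: "zz t \<in> Psi_fun w eta phi x0 x1 ` {0<..}" if t: "t \<in> {0..\<tau>}" for t
  proof -
    have t01: "t \<in> {0..1}" using t by (auto simp: \<tau>_def)
    have zlt: "zz t \<le> Psi_fun w eta phi x0 x1 (p0 + 1)"
    proof (cases "t = 0")
      case True then show ?thesis using z0 Pl by simp
    next
      case False
      have "dist t 0 < d" using t d by (auto simp: \<tau>_def dist_real_def)
      then show ?thesis using dP[OF t01 False] zz_eq[of t] t01 by simp
    qed
    have "G_fun eta phi x0 (c 0) \<le> G_fun eta phi x0 (c t)"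
      by (rule B.Gi_facts(5)) (use x0_less mono_onD[OF c_mono, of 0 t] t01 in auto)
    then have pge: "p0 \<le> G_fun eta phi x0 (c t) + Ag t" using Agb[OF t01] by (simp add: p0_def)
    have zge: "Psi_fun w eta phi x0 x1 p0 \<le> zz t"
      using B.Psi_le[OF p0pos pge] Afb[OF t01] zz_eq[of t] t01 by simp
    obtain y where y: "p0 \<le> y" "y \<le> p0 + 1" "Psi_fun w eta phi x0 x1 y = zz t"
      using IVT'[of "Psi_fun w eta phi x0 x1" p0 "zz t" "p0 + 1", OF zge zlt _ B.Psi_cont_on[OF p0pos]] by auto
    then show ?thesis using p0pos by (intro image_eqI[of _ _ y]) auto
  qed
  show ?thesis unfolding Let_def
  proof (intro exI[of _ \<tau>] conjI ballI)
    show "\<tau> > 0" using d by (simp add: \<tau>_def)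
    fix t assume t: "t \<in> {0..\<tau>}"
    have t0: "t \<ge> 0" using t by simp
    show "Psi_fun w eta phi x0 x1 (G_fun eta phi x0 (c t) + (LINT s:{0..alpha t}|lborel. g t s)) +
          (LINT s:{0..alpha t}|lborel. f t s) \<in> Psi_fun w eta phi x0 x1 ` {0<..}"
      using zin[OF t] by (simp add: zz_def)
    show "u t \<le> phi_inv phi (G_inv eta phi x0 (Psi_inv w eta phi x0 x1
          (Psi_fun w eta phi x0 x1 (G_fun eta phi x0 (c t) + (LINT s:{0..alpha t}|lborel. g t s)) +
           (LINT s:{0..alpha t}|lborel. f t s))))"
      using main[OF t0 zin[OF t]] by (simp add: zz_def)
  qed
qed

end
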